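(* Let $\Delta,\Sigma$ be alphabets and $\varphi:\Delta\to2^{\Sigma^*}$ a regular language substitution. Let $L\subseteq\Delta^*$ be a union-free language of the form $L=N_1S_1^\star N_2\cdots N_mS_m^\star N_{m+1}$ with words $N_h\in\Delta^*$ and union-free languages $S_h\subseteq\Delta^*$. If $\varepsilon\in\varphi(w)$ for all $w\in S_h$ and all $h\in\{1,\dots,m\}$, then $L$ has 1-word summaries.
   Context: A regular language substitution $\varphi:\Delta\to2^{\Sigma^*}$ maps each symbol to a regular language over $\Sigma$, extended to words by $\varphi(\varepsilon)=\{\varepsilon\}$, $\varphi(\delta w)=\varphi(\delta)\varphi(w)$, and to sets of words by $\varphi(L)=\bigcup_{w\in L}\varphi(w)$. A language is union-free if it is denoted by a regular expression using only symbols, concatenation and Kleene star (no union). A language $L\subseteq\Delta^*$ has 1-word summaries if for every finite subset $F\subseteq L$ there exists a word $w\in L$ with $\varphi(F)\subseteq\varphi(w)$. *)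

theory Defs
  imports Main
begin

definition conc :: "'a list set \<Rightarrow> 'a list set \<Rightarrow> 'a list set" where
  "conc A B = {u @ v | u v. u \<in> A \<and> v \<in> B}"

inductive_set kstar :: "'a list set \<Rightarrow> 'a list set" for A :: "'a list set" where
  kstar_Nil: "[] \<in> kstar A"
| kstar_app: "u \<in> A \<Longrightarrow> v \<in> kstar A \<Longrightarrow> u @ v \<in> kstar A"

datatype 'a rexp = Zero | One | Atom 'a | Plus "'a rexp" "'a rexp"
  | Times "'a rexp" "'a rexp" | Star "'a rexp"

fun lang :: "'a rexp \<Rightarrow> 'a list set" where
  "lang Zero = {}"
| "lang One = {[]}"
| "lang (Atom a) = {[a]}"
| "lang (Plus r s) = lang r \<union> lang s"
| "lang (Times r s) = conc (lang r) (lang s)"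
| "lang (Star r) = kstar (lang r)"

definition regular :: "'a list set \<Rightarrow> bool" where
  "regular L \<longleftrightarrow> (\<exists>r. lang r = L)"

datatype 'a ufexp = UAtom 'a | UTimes "'a ufexp" "'a ufexp" | UStar "'a ufexp"

fun uflang :: "'a ufexp \<Rightarrow> 'a list set" where
  "uflang (UAtom a) = {[a]}"
| "uflang (UTimes r s) = conc (uflang r) (uflang s)"
| "uflang (UStar r) = kstar (uflang r)"

definition union_free :: "'a list set \<Rightarrow> bool" where
  "union_free L \<longleftrightarrow> (\<exists>r. uflang r = L)"

definition regular_subst :: "('d \<Rightarrow> 's list set) \<Rightarrow> bool" where
  "regular_subst \<phi> \<longleftrightarrow> (\<forall>d. regular (\<phi> d))"

fun subst_word :: "('d \<Rightarrow> 's list set) \<Rightarrow> 'd list \<Rightarrow> 's list set" where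
  "subst_word \<phi> [] = {[]}"
| "subst_word \<phi> (d # w) = conc (\<phi> d) (subst_word \<phi> w)"

definition subst_lang :: "('d \<Rightarrow> 's list set) \<Rightarrow> 'd list set \<Rightarrow> 's list set" where
  "subst_lang \<phi> L = (\<Union>w\<in>L. subst_word \<phi> w)"

definition has_1word_summaries :: "('d \<Rightarrow> 's list set) \<Rightarrow> 'd list set \<Rightarrow> bool" where
  "has_1word_summaries \<phi> L \<longleftrightarrow>
     (\<forall>F. finite F \<and> F \<subseteq> L \<longrightarrow> (\<exists>w\<in>L. subst_lang \<phi> F \<subseteq> subst_word \<phi> w))"

text \<open>The language N_1 S_1^* N_2 ... N_m S_m^* N_{m+1}, with N, S indexed from 1.\<close>
fun uf_form :: "nat \<Rightarrow> (nat \<Rightarrow> 'a list) \<Rightarrow> (nat \<Rightarrow> 'a list set) \<Rightarrow> 'a list set" where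
  "uf_form 0 N S = {N 1}"
| "uf_form (Suc m) N S = conc (uf_form m N S) (conc (kstar (S (Suc m))) {N (Suc (Suc m))})"

end

theory Submission
  imports Defs
begin

lemma conc_mono: "A \<subseteq> A' \<Longrightarrow> B \<subseteq> B' \<Longrightarrow> conc A B \<subseteq> conc A' B'"
  unfolding conc_def by blast

lemma subst_word_append:
  "subst_word \<phi> (u @ v) = conc (subst_word \<phi> u) (subst_word \<phi> v)"
proof (induction u)
  case Nil
  then show ?case by (auto simp: conc_def)
next
  case (Cons a u)
  then show ?case by (auto simp: conc_def) (metis append.assoc)+
qed

lemma kstar_append: "u \<in> kstar S \<Longrightarrow> v \<in> kstar S \<Longrightarrow> u @ v \<in> kstar S"
  by (induction rule: kstar.induct) (auto intro: kstar.intros)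

lemma kstar_nullable:
  assumes "\<forall>w\<in>S. [] \<in> subst_word \<phi> w" and "u \<in> kstar S"
  shows "[] \<in> subst_word \<phi> u"
  using assms(2)
proof (induction rule: kstar.induct)
  case kstar_Nil then show ?case by simp
next
  case (kstar_app u v)
  then show ?case using assms(1) by (force simp: subst_word_append conc_def)
qed

lemma concat_kstar: "\<forall>x\<in>set xs. x \<in> kstar S \<Longrightarrow> concat xs \<in> kstar S"
  by (induction xs) (auto intro: kstar.intros kstar_append)

lemma concat_nullable:
  "\<forall>z\<in>set ys. [] \<in> subst_word \<phi> z \<Longrightarrow> [] \<in> subst_word \<phi> (concat ys)"
  by (induction ys) (auto simp: subst_word_append conc_def)

lemma sub_right: "[] \<in> B \<Longrightarrow> A \<subseteq> conc A B"
  unfolding conc_def by force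

lemma sub_left: "[] \<in> A \<Longrightarrow> B \<subseteq> conc A B"
  unfolding conc_def by force

lemma sub_concat:
  assumes "\<forall>x\<in>set xs. [] \<in> subst_word \<phi> x" and "x \<in> set xs"
  shows "subst_word \<phi> x \<subseteq> subst_word \<phi> (concat xs)"
  using assms
proof (induction xs)
  case Nil then show ?case by simp
next
  case (Cons y ys)
  have n1: "[] \<in> subst_word \<phi> (concat ys)" using Cons.prems(1) concat_nullable[of ys \<phi>] by simp
  have n2: "[] \<in> subst_word \<phi> y" using Cons.prems(1) by simp
  show ?case
  proof (cases "x = y")
    case True
    then show ?thesis using sub_right[OF n1] by (simp add: subst_word_append)
  next
    case False
    then have "subst_word \<phi> x \<subseteq> subst_word \<phi> (concat ys)" using Cons by simp
    then show ?thesis using sub_left[OF n2, of "subst_word \<phi> (concat ys)"]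
      by (simp add: subst_word_append)
  qed
qed

lemma main:
  assumes "\<forall>h\<in>{1..m}. \<forall>w\<in>S h. [] \<in> subst_word \<phi> w"
    and "finite F" and "F \<subseteq> uf_form m N S"
  shows "\<exists>w\<in>uf_form m N S. \<forall>f\<in>F. subst_word \<phi> f \<subseteq> subst_word \<phi> w"
  using assms
proof (induction m arbitrary: F)
  case 0
  then show ?case by auto
next
  case (Suc m)
  let ?A = "uf_form m N S" and ?S = "S (Suc m)" and ?N = "N (Suc (Suc m))"
  have dec: "\<forall>f\<in>F. \<exists>a s. f = a @ s @ ?N \<and> a \<in> ?A \<and> s \<in> kstar ?S"
  proof
    fix f assume "f \<in> F"
    then have "f \<in> conc ?A (conc (kstar ?S) {?N})" using Suc.prems(3) by auto
    then obtain u v where "f = u @ v" "u \<in> ?A" "v \<in> conc (kstar ?S) {?N}"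
      unfolding conc_def by blast
    moreover from this(3) obtain t where "v = t @ ?N" "t \<in> kstar ?S"
      unfolding conc_def by blast
    ultimately show "\<exists>a s. f = a @ s @ ?N \<and> a \<in> ?A \<and> s \<in> kstar ?S" by blast
  qed
  then obtain a s where as: "\<And>f. f \<in> F \<Longrightarrow> f = a f @ s f @ ?N \<and> a f \<in> ?A \<and> s f \<in> kstar ?S"
    by metis
  have "\<exists>w\<in>?A. \<forall>f\<in>a ` F. subst_word \<phi> f \<subseteq> subst_word \<phi> w"
  proof -
    have h1: "\<forall>h\<in>{1..m}. \<forall>w\<in>S h. [] \<in> subst_word \<phi> w" using Suc.prems(1) by auto
    have h2: "a ` F \<subseteq> ?A" using as by blast
    show ?thesis using Suc.IH[OF h1 _ h2] Suc.prems(2) by auto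
  qed
  then obtain w0 where w0: "w0 \<in> ?A" "\<And>f. f \<in> F \<Longrightarrow> subst_word \<phi> (a f) \<subseteq> subst_word \<phi> w0"
    by auto
  obtain fs where fs: "set fs = F" using Suc.prems(2) finite_list by blast
  let ?s = "concat (map s fs)"
  have nS: "\<forall>w\<in>?S. [] \<in> subst_word \<phi> w" using Suc.prems(1) by auto
  have sk: "?s \<in> kstar ?S" using as fs by (auto intro!: concat_kstar)
  have "w0 @ ?s @ ?N \<in> uf_form (Suc m) N S"
    using w0 sk by (auto simp: conc_def)
  moreover have "subst_word \<phi> f \<subseteq> subst_word \<phi> (w0 @ ?s @ ?N)" if "f \<in> F" for f
  proof -
    have "subst_word \<phi> (s f) \<subseteq> subst_word \<phi> ?s"
      apply (rule sub_concat)
      using as fs kstar_nullable[OF nS] that by auto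
    then show ?thesis using as[OF that] w0(2)[OF that]
      by (metis conc_mono order_refl subst_word_append)
  qed
  ultimately show ?case by blast
qed

theorem proposition14:
  fixes \<phi> :: "'d::finite \<Rightarrow> 's::finite list set"
    and L :: "'d list set"
    and m :: nat
    and N :: "nat \<Rightarrow> 'd list"
    and S :: "nat \<Rightarrow> 'd list set"
  assumes "regular_subst \<phi>"
    and "union_free L"
    and "L = uf_form m N S"
    and "\<forall>h\<in>{1..m}. union_free (S h)"
    and "\<forall>h\<in>{1..m}. \<forall>w\<in>S h. [] \<in> subst_word \<phi> w"
  shows "has_1word_summaries \<phi> L"
  unfolding has_1word_summaries_def
proof (intro allI impI)
  fix F assume F: "finite F \<and> F \<subseteq> L"
  then obtain w where w: "w \<in> L" "\<forall>f\<in>F. subst_word \<phi> f \<subseteq> subst_word \<phi> w"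
    using main[OF assms(5), of F N] assms(3) by auto
  then show "\<exists>w\<in>L. subst_lang \<phi> F \<subseteq> subst_word \<phi> w"
    unfolding subst_lang_def by blast
qed

end
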